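(* Any braid $b\in\mathcal{B}_3$ which is not a power of $\Delta_3$ can be written in a unique way in the form $\sigma_j^k\,b_1\,\Delta_3^{\ell}$, where $j=1$ or $j=2$, $k\ne0$ is an integer, $\ell$ is a (not necessarily even) integer, and $b_1$ is a word in $\sigma_1^2$ and $\sigma_2^2$ in reduced form such that, if $b_1$ is not the identity, the first term of $b_1$ is a non-zero even power of $\sigma_2$ if $j=1$, and a non-zero even power of $\sigma_1$ if $j=2$.
   Context: $\mathcal{B}_3$ is the braid group on three strands with standard generators $\sigma_1,\sigma_2$; $\Delta_3=\sigma_1\sigma_2\sigma_1$ is the Garside element. A word in $\sigma_1^2,\sigma_2^2$ in reduced form is a product of nonzero powers of $\sigma_1^2$ and $\sigma_2^2$ alternating between the two; its terms are these maximal powers. *)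

theory Defs
  imports Main
begin

text \<open>Braid group B_3 presented by words in the letters 1, 2, -1, -2
  (sigma_1, sigma_2 and their inverses) modulo the congruence generated by
  free cancellation and the braid relation sigma_1 sigma_2 sigma_1 = sigma_2 sigma_1 sigma_2.\<close>

definition letters :: "int set" where
  "letters = {1, -1, 2, -2}"

inductive braid_eq :: "int list \<Rightarrow> int list \<Rightarrow> bool" where
  refl: "braid_eq u u"
| sym: "braid_eq u v \<Longrightarrow> braid_eq v u"
| trans: "braid_eq u v \<Longrightarrow> braid_eq v w \<Longrightarrow> braid_eq u w"
| cancel: "a \<in> letters \<Longrightarrow> braid_eq (u @ [a, -a] @ v) (u @ v)"
| braid_rel: "braid_eq (u @ [1, 2, 1] @ v) (u @ [2, 1, 2] @ v)"

definition spow :: "int \<Rightarrow> int \<Rightarrow> int list" where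
  "spow j k = (if 0 \<le> k then replicate (nat k) j else replicate (nat (-k)) (-j))"

definition delta_pow :: "int \<Rightarrow> int list" where
  "delta_pow l = (if 0 \<le> l then concat (replicate (nat l) [1, 2, 1])
                  else concat (replicate (nat (-l)) [-1, -2, -1]))"

text \<open>A word in sigma_1^2, sigma_2^2 given by its list of terms: (g, e) stands for
  the term (sigma_g^2)^e = sigma_g^(2e).\<close>
definition sq_word :: "(int \<times> int) list \<Rightarrow> int list" where
  "sq_word ts = concat (map (\<lambda>(g, e). spow g (2 * e)) ts)"

definition reduced_sq :: "(int \<times> int) list \<Rightarrow> bool" where
  "reduced_sq ts \<longleftrightarrow> (\<forall>(g, e) \<in> set ts. g \<in> {1, 2} \<and> e \<noteq> 0)
      \<and> (\<forall>i. Suc i < length ts \<longrightarrow> fst (ts ! i) \<noteq> fst (ts ! Suc i))"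

definition normal_data :: "int \<Rightarrow> int \<Rightarrow> (int \<times> int) list \<Rightarrow> int \<Rightarrow> bool" where
  "normal_data j k ts l \<longleftrightarrow> j \<in> {1, 2} \<and> k \<noteq> 0 \<and> reduced_sq ts
      \<and> (ts \<noteq> [] \<longrightarrow> fst (hd ts) = 3 - j)"

end

theory Submission
  imports Defs
begin


datatype st = Dl int | NF int int "int list" int

fun valid :: "st \<Rightarrow> bool" where
  "valid (Dl m) = True"
| "valid (NF j k es l) = (j \<in> {1,2} \<and> k \<noteq> 0 \<and> 0 \<notin> set es)"

fun lactI :: "int \<Rightarrow> int \<Rightarrow> st \<Rightarrow> st" where
  "lactI i d (Dl m) = NF i d [] m"
| "lactI i d (NF j k es l) =
   (if i = j then (if k + d \<noteq> 0 then NF j (k+d) es l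
                  else (case es of [] \<Rightarrow> Dl l | e#es' \<Rightarrow> NF (3-j) (2*e) es' l))
    else if even k then NF i d (k div 2 # es) l
    else if d = 1 then (if k \<noteq> 1 then NF j (-1) ((k-1) div 2 # es) (l+1)
                        else (case es of [] \<Rightarrow> NF j (-1) [] (l+1) | e#es' \<Rightarrow> NF j (2*e-1) es' (l+1)))
    else (if k \<noteq> -1 then NF j 1 ((k+1) div 2 # es) (l-1)
          else (case es of [] \<Rightarrow> NF j 1 [] (l-1) | e#es' \<Rightarrow> NF j (2*e+1) es' (l-1))))"

lemma valid_lactI: "valid s \<Longrightarrow> i \<in> {1,2} \<Longrightarrow> d \<in> {1,-1} \<Longrightarrow> valid (lactI i d s)"
  apply (cases s)
   apply auto
  apply (auto split: list.splits if_splits)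
  apply presburger+
  done

lemma inv1: "valid s \<Longrightarrow> i \<in> {1,2} \<Longrightarrow> lactI i 1 (lactI i (-1) s) = s"
  apply (cases s)
   apply (auto split: list.splits if_splits)
  apply presburger+
  done

lemma inv2: "valid s \<Longrightarrow> i \<in> {1,2} \<Longrightarrow> lactI i (-1) (lactI i 1 s) = s"
  apply (cases s)
   apply (auto split: list.splits if_splits)
  done

lemma braid1: "k \<noteq> 0 \<Longrightarrow> 0 \<notin> set es \<Longrightarrow> k = 2*n \<or> k = 2*n+1 \<Longrightarrow>
   lactI 1 1 (lactI 2 1 (lactI 1 1 (NF 1 k es l))) = lactI 2 1 (lactI 1 1 (lactI 2 1 (NF 1 k es l)))"
  apply (elim disjE)
  apply (auto split: list.splits if_splits)
  done
lemma braid2: "k \<noteq> 0 \<Longrightarrow> 0 \<notin> set es \<Longrightarrow> k = 2*n \<or> k = 2*n+1 \<Longrightarrow>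
   lactI 1 1 (lactI 2 1 (lactI 1 1 (NF 2 k es l))) = lactI 2 1 (lactI 1 1 (lactI 2 1 (NF 2 k es l)))"
  apply (elim disjE)
  apply (simp_all split: list.splits if_splits)
  apply (auto split: list.splits if_splits)
  done

lemma braidI: "valid s \<Longrightarrow> lactI 1 1 (lactI 2 1 (lactI 1 1 s)) = lactI 2 1 (lactI 1 1 (lactI 2 1 s))"
proof (cases s)
  case (NF j k es l)
  assume "valid s"
  then have h: "j = 1 \<or> j = 2" "k \<noteq> 0" "0 \<notin> set es" using NF by auto
  obtain n where n: "k = 2*n \<or> k = 2*n+1" by (metis oddE evenE)
  from h(1) show ?thesis unfolding NF
    using braid1[OF h(2,3) n, of l] braid2[OF h(2,3) n, of l] by metis
qed simp


declare braid_eq.trans [trans]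

lemma bcong: "braid_eq u v \<Longrightarrow> braid_eq (p @ u @ q) (p @ v @ q)"
proof (induction rule: braid_eq.induct)
  case (refl u) then show ?case by (rule braid_eq.refl)
next
  case (sym u v) show ?case using sym.IH by (rule braid_eq.sym)
next
  case (trans u v w) then show ?case by (metis braid_eq.trans)
next
  case (cancel a u v)
  then show ?case using braid_eq.cancel[of a "p @ u" "v @ q"] by simp
next
  case (braid_rel u v)
  then show ?case using braid_eq.braid_rel[of "p @ u" "v @ q"] by simp
qed

lemma bl: "braid_eq u v \<Longrightarrow> braid_eq (p @ u) (p @ v)"
  using bcong[of u v p "[]"] by simp
lemma br: "braid_eq u v \<Longrightarrow> braid_eq (u @ q) (v @ q)"
  using bcong[of u v "[]" q] by simp

lemma canc: "a \<in> letters \<Longrightarrow> braid_eq (u @ a # -a # v) (u @ v)"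
  using braid_eq.cancel[of a u v] by simp

lemma canc0: "a \<in> letters \<Longrightarrow> braid_eq (a # -a # v) v"
  using canc[of a "[]" v] by simp

definition swp :: "int \<Rightarrow> int" where
  "swp a = (if a = 1 then 2 else if a = 2 then 1 else if a = -1 then -2 else if a = -2 then -1 else a)"

lemma swp_swp[simp]: "swp (swp a) = a" by (auto simp: swp_def)
lemma swp_vals[simp]: "swp 1 = 2" "swp 2 = 1" "swp (-1) = -2" "swp (-2) = -1"
  by (auto simp: swp_def)

definition DD :: "int list" where "DD = [1,2,1]"
definition Di :: "int list" where "Di = [-1,-2,-1]"

lemma D_letter: "a \<in> letters \<Longrightarrow> braid_eq (DD @ [a]) (swp a # DD)"
proof -
  assume "a \<in> letters"
  then have "a = 1 \<or> a = -1 \<or> a = 2 \<or> a = -2" by (auto simp: letters_def)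
  then show ?thesis
  proof (elim disjE)
    assume a: "a = 1" 
    show ?thesis using braid_eq.braid_rel[of "[]" "[1]"] by (simp add: a DD_def)
  next
    assume a: "a = 2"
    show ?thesis using braid_eq.sym[OF braid_eq.braid_rel[of "[1]" "[]"]] by (simp add: a DD_def)
  next
    assume a: "a = -1"
    have h1: "braid_eq [1,2,1,-1] [1,2]" using canc[of 1 "[1,2]" "[]"] by (simp add: letters_def)
    have h2: "braid_eq [-2,1,2,1] [1,2]"
    proof -
      have "braid_eq [-2,1,2,1] [-2,2,1,2]" using braid_eq.braid_rel[of "[-2]" "[]"] by simp
      also have "braid_eq \<dots> [1,2]" using canc0[of "-2" "[1,2]"] by (simp add: letters_def)
      finally show ?thesis .
    qed
    have "braid_eq [1,2,1,a] [swp a, 1,2,1]" unfolding a by simp (rule braid_eq.trans[OF h1 braid_eq.sym[OF h2]])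
    then show ?thesis by (simp add: DD_def)
  next
    assume a: "a = -2"
    have h2: "braid_eq [-1,1,2,1] [2,1]" using canc0[of "-1" "[2,1]"] by (simp add: letters_def)
    have h1: "braid_eq [1,2,1,-2] [2,1]"
    proof -
      have "braid_eq [1,2,1,-2] [2,1,2,-2]" using braid_eq.braid_rel[of "[]" "[-2]"] by simp
      also have "braid_eq \<dots> [2,1]" using canc[of 2 "[2,1]" "[]"] by (simp add: letters_def)
      finally show ?thesis .
    qed
    have "braid_eq [1,2,1,a] [swp a, 1,2,1]" unfolding a by simp (rule braid_eq.trans[OF h1 braid_eq.sym[OF h2]])
    then show ?thesis by (simp add: DD_def)
  qed
qed

lemma D_word: "set x \<subseteq> letters \<Longrightarrow> braid_eq (DD @ x) (map swp x @ DD)"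
proof (induction x)
  case Nil then show ?case by (simp add: braid_eq.refl)
next
  case (Cons a x)
  have "braid_eq (DD @ a # x) ((DD @ [a]) @ x)" by (simp add: braid_eq.refl)
  also have "braid_eq \<dots> ((swp a # DD) @ x)" using Cons.prems by (intro br D_letter) auto
  also have "braid_eq \<dots> ([swp a] @ (DD @ x))" by (simp add: braid_eq.refl)
  also have "braid_eq \<dots> ([swp a] @ (map swp x @ DD))" using Cons by (intro bl) auto
  finally show ?case by simp
qed

lemma DDi: "braid_eq (DD @ Di) []"
proof -
  have "braid_eq [1,2,1,-1,-2,-1] [1,2,-2,-1]" using canc[of 1 "[1,2]" "[-2,-1]"] by (simp add: letters_def)
  also have "braid_eq \<dots> [1,-1]" using canc[of 2 "[1]" "[-1]"] by (simp add: letters_def)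
  also have "braid_eq \<dots> []" using canc[of 1 "[]" "[]"] by (simp add: letters_def)
  finally show ?thesis by (simp add: DD_def Di_def)
qed

lemma DiD: "braid_eq (Di @ DD) []"
proof -
  have "braid_eq [-1,-2,-1,1,2,1] [-1,-2,2,1]" using canc[of "-1" "[-1,-2]" "[2,1]"] by (simp add: letters_def)
  also have "braid_eq \<dots> [-1,1]" using canc[of "-2" "[-1]" "[1]"] by (simp add: letters_def)
  also have "braid_eq \<dots> []" using canc[of "-1" "[]" "[]"] by (simp add: letters_def)
  finally show ?thesis by (simp add: DD_def Di_def)
qed

lemma swp_letters: "set x \<subseteq> letters \<Longrightarrow> set (map swp x) \<subseteq> letters"
  by (auto simp: letters_def)

lemma Di_word: "set x \<subseteq> letters \<Longrightarrow> braid_eq (Di @ x) (map swp x @ Di)"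
proof -
  assume x: "set x \<subseteq> letters"
  have "braid_eq (Di @ x) (Di @ x @ (DD @ Di))" using bl[OF braid_eq.sym[OF DDi], of "Di @ x"] by simp
  also have "braid_eq \<dots> ((Di @ (x @ DD)) @ Di)" by (simp add: braid_eq.refl)
  also have "braid_eq \<dots> ((Di @ (DD @ map swp x)) @ Di)"
    using D_word[OF swp_letters[OF x]] by (intro br bl) (simp add: braid_eq.sym comp_def)
  also have "braid_eq \<dots> ((Di @ DD) @ map swp x @ Di)" by (simp add: braid_eq.refl)
  also have "braid_eq \<dots> ([] @ map swp x @ Di)" by (intro br DiD)
  finally show ?thesis by simp
qed


lemma letters_12: "j \<in> {1,2} \<Longrightarrow> j \<in> letters \<and> -j \<in> letters"
  by (auto simp: letters_def)

lemma spow_succ: "j \<in> {1,2} \<Longrightarrow> braid_eq (spow j (k+1)) (j # spow j k)"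
proof (cases "k \<ge> 0")
  case True
  then obtain n where "k = int n" by (metis nonneg_eq_int)
  then show ?thesis by (simp add: spow_def braid_eq.refl nat_add_distrib)
next
  case False
  assume j: "j \<in> {1,2}"
  define n where "n = nat (-k-1)"
  have n: "k = - int n - 1" using False by (simp add: n_def)
  have "spow j k = -j # spow j (k+1)" using n by (simp add: spow_def nat_add_distrib)
  then show ?thesis using canc0[of j "spow j (k+1)"] letters_12[OF j] by (simp add: braid_eq.sym)
qed

lemma spow_pred: "j \<in> {1,2} \<Longrightarrow> braid_eq (spow j (k-1)) (-j # spow j k)"
proof (cases "k \<le> 0")
  case True
  then obtain n where "k = - int n" by (metis minus_minus neg_0_le_iff_le nonneg_eq_int)
  then show ?thesis by (simp add: spow_def braid_eq.refl nat_add_distrib)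
next
  case False
  assume j: "j \<in> {1,2}"
  define n where "n = nat (k-1)"
  have n: "k = int n + 1" using False by (simp add: n_def)
  have "spow j k = j # spow j (k-1)" using n by (simp add: spow_def nat_add_distrib)
  then show ?thesis using canc0[of "-j" "spow j (k-1)"] letters_12[OF j] by (simp add: braid_eq.sym)
qed

lemma spow_letters: "j \<in> {1,2} \<Longrightarrow> set (spow j k) \<subseteq> letters"
  by (auto simp: spow_def letters_def)

lemma spow_swp: "j \<in> {1,2} \<Longrightarrow> map swp (spow j k) = spow (3-j) k"
  by (auto simp: spow_def)

fun alt :: "int \<Rightarrow> int list \<Rightarrow> (int \<times> int) list" where
  "alt g [] = []"
| "alt g (e # es) = (g, e) # alt (3-g) es"

lemma sq_Nil[simp]: "sq_word [] = []" by (simp add: sq_word_def)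
lemma sq_Cons[simp]: "sq_word ((g,e) # ts) = spow g (2*e) @ sq_word ts" by (simp add: sq_word_def)

lemma sq_letters: "g \<in> {1,2} \<Longrightarrow> set (sq_word (alt g es)) \<subseteq> letters"
proof (induction es arbitrary: g)
  case Nil then show ?case by simp
next
  case (Cons e es)
  then have "3 - g \<in> {1,2}" by auto
  with Cons show ?case using spow_letters[OF Cons.prems] by auto
qed

lemma sq_swp: "g \<in> {1,2} \<Longrightarrow> map swp (sq_word (alt g es)) = sq_word (alt (3-g) es)"
proof (induction es arbitrary: g)
  case Nil then show ?case by simp
next
  case (Cons e es)
  then have "3 - g \<in> {1,2}" by auto
  with Cons show ?case using spow_swp[OF Cons.prems] by auto
qed

lemma dp_pos: "l \<ge> 0 \<Longrightarrow> delta_pow (l+1) = DD @ delta_pow l"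
proof -
  assume "l \<ge> 0" then obtain n where "l = int n" by (metis nonneg_eq_int)
  then show ?thesis by (simp add: delta_pow_def DD_def nat_add_distrib)
qed

lemma dp_neg: "l \<le> 0 \<Longrightarrow> delta_pow (l-1) = Di @ delta_pow l"
proof -
  assume "l \<le> 0" then obtain n where "l = - int n" by (metis minus_minus neg_0_le_iff_le nonneg_eq_int)
  then show ?thesis by (simp add: delta_pow_def Di_def nat_add_distrib)
qed

lemma D_dp: "braid_eq (DD @ delta_pow l) (delta_pow (l+1))"
proof (cases "l \<ge> 0")
  case True then show ?thesis by (simp add: dp_pos braid_eq.refl)
next
  case False
  then have "delta_pow l = Di @ delta_pow (l+1)" using dp_neg[of "l+1"] by simp
  then show ?thesis using br[OF DDi, of "delta_pow (l+1)"] by simp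
qed

lemma Di_dp: "braid_eq (Di @ delta_pow l) (delta_pow (l-1))"
proof (cases "l \<le> 0")
  case True then show ?thesis by (simp add: dp_neg braid_eq.refl)
next
  case False
  then have "delta_pow l = DD @ delta_pow (l-1)" using dp_pos[of "l-1"] by simp
  then show ?thesis using br[OF DiD, of "delta_pow (l-1)"] by simp
qed

lemma L1: "i \<in> {1,2} \<Longrightarrow> j = 3 - i \<Longrightarrow> braid_eq (i # spow j k) (-j # spow i (k-1) @ DD)"
proof -
  assume i: "i \<in> {1,2}" and j: "j = 3 - i"
  then have j2: "j \<in> {1,2}" by auto
  have "braid_eq (i # spow j k) ([i] @ spow j ((k - 1) + 1))" by (simp add: braid_eq.refl)
  also have "braid_eq \<dots> ([i] @ j # spow j (k-1))" by (intro bl spow_succ j2)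
  also have "braid_eq \<dots> ([i, j] @ spow j (k-1))" by (simp add: braid_eq.refl)
  also have "braid_eq \<dots> (([-j] @ DD) @ spow j (k-1))"
  proof (intro br)
    show "braid_eq [i, j] ([-j] @ DD)"
    proof (cases "i = 1")
      case True
      then have "j = 2" using j by simp
      have "braid_eq [-2,1,2,1] [-2,2,1,2]" using braid_eq.braid_rel[of "[-2]" "[]"] by simp
      also have "braid_eq \<dots> [1,2]" using canc0[of "-2" "[1,2]"] by (simp add: letters_def)
      finally show ?thesis using True \<open>j = 2\<close> by (simp add: DD_def braid_eq.sym)
    next
      case False
      then have "i = 2" "j = 1" using i j by auto
      have "braid_eq [-1,1,2,1] [2,1]" using canc0[of "-1" "[2,1]"] by (simp add: letters_def)
      then show ?thesis using \<open>i = 2\<close> \<open>j = 1\<close> by (simp add: DD_def braid_eq.sym)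
    qed
  qed
  also have "braid_eq \<dots> ([-j] @ (DD @ spow j (k-1)))" by (simp add: braid_eq.refl)
  also have "braid_eq \<dots> ([-j] @ (spow i (k-1) @ DD))"
    using D_word[OF spow_letters[OF j2]] spow_swp[OF j2] j by (intro bl) simp
  finally show ?thesis by simp
qed

lemma L1': "i \<in> {1,2} \<Longrightarrow> j = 3 - i \<Longrightarrow> braid_eq (-i # spow j k) (j # spow i (k+1) @ Di)"
proof -
  assume i: "i \<in> {1,2}" and j: "j = 3 - i"
  then have j2: "j \<in> {1,2}" by auto
  have "braid_eq (-i # spow j k) ([-i] @ spow j ((k + 1) - 1))" by (simp add: braid_eq.refl)
  also have "braid_eq \<dots> ([-i] @ -j # spow j (k+1))" by (intro bl spow_pred j2)
  also have "braid_eq \<dots> ([-i, -j] @ spow j (k+1))" by (simp add: braid_eq.refl)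
  also have "braid_eq \<dots> (([j] @ Di) @ spow j (k+1))"
  proof (intro br)
    show "braid_eq [-i, -j] ([j] @ Di)"
    proof (cases "i = 1")
      case True
      then have "j = 2" using j by simp
      have "braid_eq ([2] @ Di) (Di @ [1])" using Di_word[of "[1]"] by (simp add: letters_def braid_eq.sym)
      also have "braid_eq (Di @ [1]) [-1,-2]" using canc[of "-1" "[-1,-2]" "[]"] by (simp add: letters_def Di_def)
      finally show ?thesis using True \<open>j = 2\<close> by (simp add: braid_eq.sym)
    next
      case False
      then have "i = 2" "j = 1" using i j by auto
      have "braid_eq [1,-1,-2,-1] [-2,-1]" using canc0[of "1" "[-2,-1]"] by (simp add: letters_def)
      then show ?thesis using \<open>i = 2\<close> \<open>j = 1\<close> by (simp add: Di_def braid_eq.sym)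
    qed
  qed
  also have "braid_eq \<dots> ([j] @ (Di @ spow j (k+1)))" by (simp add: braid_eq.refl)
  also have "braid_eq \<dots> ([j] @ (spow i (k+1) @ Di))"
    using Di_word[OF spow_letters[OF j2]] spow_swp[OF j2] j by (intro bl) simp
  finally show ?thesis by simp
qed



fun word :: "st \<Rightarrow> int list" where
  "word (Dl m) = delta_pow m"
| "word (NF j k es l) = spow j k @ sq_word (alt (3-j) es) @ delta_pow l"

lemma key_pos: "i \<in> {1,2} \<Longrightarrow> j = 3 - i \<Longrightarrow>
  braid_eq (i # spow j k @ sq_word (alt i es) @ delta_pow l)
           (-j # spow i (k-1) @ sq_word (alt j es) @ delta_pow (l+1))"
proof -
  assume i: "i \<in> {1,2}" and j: "j = 3 - i"
  have "braid_eq (i # spow j k @ sq_word (alt i es) @ delta_pow l)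
     ((-j # spow i (k-1) @ DD) @ sq_word (alt i es) @ delta_pow l)"
    using L1[OF i j, of k] br by (metis append_Cons)
  also have "braid_eq \<dots> ((-j # spow i (k-1)) @ (DD @ sq_word (alt i es)) @ delta_pow l)" by (simp add: braid_eq.refl)
  also have "braid_eq \<dots> ((-j # spow i (k-1)) @ (sq_word (alt j es) @ DD) @ delta_pow l)"
    using D_word[OF sq_letters[OF i, of es]] sq_swp[OF i, of es] j by (intro bcong) simp
  also have "braid_eq \<dots> ((-j # spow i (k-1) @ sq_word (alt j es)) @ (DD @ delta_pow l))" by (simp add: braid_eq.refl)
  also have "braid_eq \<dots> ((-j # spow i (k-1) @ sq_word (alt j es)) @ delta_pow (l+1))" by (intro bl D_dp)
  finally show ?thesis by simp
qed

lemma key_neg: "i \<in> {1,2} \<Longrightarrow> j = 3 - i \<Longrightarrow>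
  braid_eq (-i # spow j k @ sq_word (alt i es) @ delta_pow l)
           (j # spow i (k+1) @ sq_word (alt j es) @ delta_pow (l-1))"
proof -
  assume i: "i \<in> {1,2}" and j: "j = 3 - i"
  have "braid_eq (-i # spow j k @ sq_word (alt i es) @ delta_pow l)
     ((j # spow i (k+1) @ Di) @ sq_word (alt i es) @ delta_pow l)"
    using L1'[OF i j, of k] br by (metis append_Cons)
  also have "braid_eq \<dots> ((j # spow i (k+1)) @ (Di @ sq_word (alt i es)) @ delta_pow l)" by (simp add: braid_eq.refl)
  also have "braid_eq \<dots> ((j # spow i (k+1)) @ (sq_word (alt j es) @ Di) @ delta_pow l)"
    using Di_word[OF sq_letters[OF i, of es]] sq_swp[OF i, of es] j by (intro bcong) simp
  also have "braid_eq \<dots> ((j # spow i (k+1) @ sq_word (alt j es)) @ (Di @ delta_pow l))" by (simp add: braid_eq.refl)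
  also have "braid_eq \<dots> ((j # spow i (k+1) @ sq_word (alt j es)) @ delta_pow (l-1))" by (intro bl Di_dp)
  finally show ?thesis by simp
qed

lemma spow_one[simp]: "spow j 1 = [j]" "spow j (-1) = [-j]" "spow j 0 = []"
  by (auto simp: spow_def)

lemma lactI_word: "valid s \<Longrightarrow> i \<in> {1,2} \<Longrightarrow> d \<in> {1,-1} \<Longrightarrow>
   braid_eq (word (lactI i d s)) ((d*i) # word s)"
proof (cases s)
  case (Dl m)
  assume "d \<in> {1,-1}"
  then show ?thesis using Dl by (auto simp: braid_eq.refl)
next
  case (NF j k es l)
  assume v: "valid s" and i: "i \<in> {1,2}" and d: "d \<in> {1,-1}"
  from v NF have j: "j \<in> {1,2}" and k: "k \<noteq> 0" and es: "0 \<notin> set es" by auto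
  have dl: "d * i \<in> letters" using i d by (auto simp: letters_def)
  show ?thesis
  proof (cases "i = j")
    case True
    show ?thesis
    proof (cases "k + d = 0")
      case False
      have "braid_eq (spow j (k+d)) (d*j # spow j k)"
        using d spow_succ[OF j, of k] spow_pred[OF j, of k] by auto
      then show ?thesis using NF True False br by (metis append_Cons lactI.simps(2) word.simps(2))
    next
      case k0: True
      have "k = -d" using k0 by linarith
      then have sk: "spow j k = [-(d*j)]" using d by auto
      show ?thesis
      proof (cases es)
        case Nil
        then show ?thesis using NF True k0 sk canc0[OF dl[unfolded True], of "delta_pow l"]
          by (simp add: braid_eq.sym)
      next
        case (Cons e es')
        have "3 - (3 - j) = j" by simp
        then show ?thesis using NF True k0 sk Cons canc0[OF dl[unfolded True]]
          by (simp add: braid_eq.sym)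
      qed
    qed
  next
    case False
    then have ij: "j = 3 - i" using i j by auto
    have i3: "3 - i = j" "3 - j = i" using ij by auto
    show ?thesis
    proof (cases "even k")
      case True
      then have "2 * (k div 2) = k" by simp
      then show ?thesis using NF False True i3 d by (auto simp: braid_eq.refl)
    next
      case odd: False
      show ?thesis
      proof (cases "d = 1")
        case d1: True
        have ws: "word s = spow j k @ sq_word (alt i es) @ delta_pow l" using NF ij by simp
        note KP = key_pos[OF i ij, of k es l]
        show ?thesis
        proof (cases "k = 1")
          case False
          have "2 * ((k - 1) div 2) = k - 1" using odd by presburger
          then have "word (lactI i d s) = -j # spow i (k-1) @ sq_word (alt j es) @ delta_pow (l+1)"
            using NF d1 False odd \<open>i \<noteq> j\<close> ij by simp
          then show ?thesis using KP ws d1 by (simp add: braid_eq.sym)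
        next
          case k1: True
          show ?thesis
          proof (cases es)
            case Nil
            then show ?thesis using KP ws d1 k1 NF \<open>i \<noteq> j\<close> by (simp add: braid_eq.sym)
          next
            case (Cons e es')
            have w: "word (lactI i d s) = spow j (2*e-1) @ sq_word (alt i es') @ delta_pow (l+1)"
              using NF d1 k1 Cons \<open>i \<noteq> j\<close> ij by simp
            have "braid_eq (spow j (2*e-1) @ sq_word (alt i es') @ delta_pow (l+1))
                   ((-j # spow j (2*e)) @ sq_word (alt i es') @ delta_pow (l+1))"
              by (intro br spow_pred j)
            also have "braid_eq \<dots> (i # word s)"
              using KP ws k1 Cons ij by (simp add: braid_eq.sym)
            finally show ?thesis using w d1 by simp
          qed
        qed
      next
        case False
        then have d1: "d = -1" using d by auto
        have ws: "word s = spow j k @ sq_word (alt i es) @ delta_pow l" using NF ij by simp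
        note KP = key_neg[OF i ij, of k es l]
        show ?thesis
        proof (cases "k = -1")
          case False
          obtain m where km: "k = 2*m+1" using odd by (metis oddE)
          have "(2*m+1+1) div 2 = m + 1" by simp
          then have "word (lactI i d s) = j # spow i (k+1) @ sq_word (alt j es) @ delta_pow (l-1)"
            using NF d1 False odd \<open>i \<noteq> j\<close> ij km by simp
          then show ?thesis using KP ws d1 by (simp add: braid_eq.sym)
        next
          case k1: True
          show ?thesis
          proof (cases es)
            case Nil
            then show ?thesis using KP ws d1 k1 NF \<open>i \<noteq> j\<close> by (simp add: braid_eq.sym)
          next
            case (Cons e es')
            have w: "word (lactI i d s) = spow j (2*e+1) @ sq_word (alt i es') @ delta_pow (l-1)"
              using NF d1 k1 Cons \<open>i \<noteq> j\<close> ij by simp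
            have "braid_eq (spow j (2*e+1) @ sq_word (alt i es') @ delta_pow (l-1))
                   ((j # spow j (2*e)) @ sq_word (alt i es') @ delta_pow (l-1))"
              by (intro br spow_succ j)
            also have "braid_eq \<dots> (-i # word s)"
              using KP ws k1 Cons ij by (simp add: braid_eq.sym)
            finally show ?thesis using w d1 by simp
          qed
        qed
      qed
    qed
  qed
qed



definition lact :: "int \<Rightarrow> st \<Rightarrow> st" where
  "lact a s = (if a \<in> letters then lactI \<bar>a\<bar> (sgn a) s else s)"

lemma letters_cases: "a \<in> letters \<Longrightarrow> a = 1 \<or> a = -1 \<or> a = 2 \<or> a = -2"
  by (auto simp: letters_def)

lemma lact_vals: "lact 1 s = lactI 1 1 s" "lact (-1) s = lactI 1 (-1) s"
  "lact 2 s = lactI 2 1 s" "lact (-2) s = lactI 2 (-1) s"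
  by (auto simp: lact_def letters_def)

lemma valid_lact: "valid s \<Longrightarrow> valid (lact a s)"
proof -
  assume v: "valid s"
  show ?thesis
  proof (cases "a \<in> letters")
    case True
    then show ?thesis using letters_cases[OF True] v valid_lactI[OF v] by (auto simp: lact_vals)
  qed (simp add: lact_def v)
qed

lemma valid_foldr: "valid s \<Longrightarrow> valid (foldr lact u s)"
  by (induction u) (auto intro: valid_lact)

lemma lact_word: "valid s \<Longrightarrow> a \<in> letters \<Longrightarrow> braid_eq (word (lact a s)) (a # word s)"
  using letters_cases[of a] lactI_word[of s 1 1] lactI_word[of s 1 "-1"] lactI_word[of s 2 1]
    lactI_word[of s 2 "-1"] by (auto simp: lact_vals)

lemma lact_inv: "valid s \<Longrightarrow> a \<in> letters \<Longrightarrow> lact a (lact (-a) s) = s"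
  using letters_cases[of a] inv1[of s] inv2[of s] by (auto simp: lact_vals)

lemma lact_braid: "valid s \<Longrightarrow> lact 1 (lact 2 (lact 1 s)) = lact 2 (lact 1 (lact 2 s))"
  using braidI[of s] by (simp add: lact_vals)

lemma inv_foldr: "braid_eq u v \<Longrightarrow> valid s \<Longrightarrow> foldr lact u s = foldr lact v s"
proof (induction arbitrary: s rule: braid_eq.induct)
  case (cancel a u v)
  have "valid (foldr lact v s)" using cancel valid_foldr by blast
  then show ?case using lact_inv[of "foldr lact v s" a] cancel by simp
next
  case (braid_rel u v)
  have "valid (foldr lact v s)" using braid_rel valid_foldr by blast
  then show ?case using lact_braid[of "foldr lact v s"] by simp
qed auto

lemma eval_word: "set w \<subseteq> letters \<Longrightarrow> valid (foldr lact w (Dl 0)) \<and> braid_eq (word (foldr lact w (Dl 0))) w"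
proof (induction w)
  case Nil then show ?case by (simp add: delta_pow_def braid_eq.refl)
next
  case (Cons a w)
  then have v: "valid (foldr lact w (Dl 0))" and b: "braid_eq (word (foldr lact w (Dl 0))) w"
    and a: "a \<in> letters" by auto
  have "braid_eq (word (lact a (foldr lact w (Dl 0)))) (a # word (foldr lact w (Dl 0)))"
    by (rule lact_word[OF v a])
  also have "braid_eq \<dots> ([a] @ w)" using bl[OF b, of "[a]"] by simp
  finally show ?case using valid_lact[OF v] by simp
qed

lemma fD: "foldr lact (concat (replicate n [1,2,1])) (Dl m) = Dl (m + int n)"
  by (induction n arbitrary: m) (auto simp: lact_vals)

lemma fDi: "foldr lact (concat (replicate n [-1,-2,-1])) (Dl m) = Dl (m - int n)"
  by (induction n arbitrary: m) (auto simp: lact_vals)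

lemma fdp: "foldr lact (delta_pow l) (Dl 0) = Dl l"
  by (auto simp: delta_pow_def fD fDi)

lemma fspow_pos: "j \<in> {1,2} \<Longrightarrow> lact j s = NF j 1 es0 l \<Longrightarrow>
    foldr lact (replicate (Suc n) j) s = NF j (int (Suc n)) es0 l"
proof (induction n)
  case 0 then show ?case by simp
next
  case (Suc n)
  then show ?case using letters_12[of j] by (auto simp: lact_def)
qed

lemma fspow_neg: "j \<in> {1,2} \<Longrightarrow> lact (-j) s = NF j (-1) es0 l \<Longrightarrow>
    foldr lact (replicate (Suc n) (-j)) s = NF j (- int (Suc n)) es0 l"
proof (induction n)
  case 0 then show ?case by simp
next
  case (Suc n)
  then show ?case using letters_12[of j] by (auto simp: lact_def)
qed

lemma fspow: "j \<in> {1,2} \<Longrightarrow> lact j s = NF j 1 es0 l \<Longrightarrow> lact (-j) s = NF j (-1) es0 l \<Longrightarrow> k \<noteq> 0 \<Longrightarrow>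
    foldr lact (spow j k) s = NF j k es0 l"
proof (cases "k > 0")
  case True
  assume h: "j \<in> {1,2}" "lact j s = NF j 1 es0 l"
  define n where "n = nat (k - 1)"
  have k: "nat k = Suc n" using True unfolding n_def by (simp add: nat_eq_iff)
  have "spow j k = replicate (Suc n) j" using True k by (simp add: spow_def del: replicate_Suc)
  moreover have "k = int (Suc n)" using True k by (simp add: nat_eq_iff)
  ultimately show ?thesis using fspow_pos[OF h, of n] by (simp only:)
next
  case False
  assume h: "j \<in> {1,2}" "lact (-j) s = NF j (-1) es0 l" "k \<noteq> 0"
  define n where "n = nat (-k - 1)"
  have k: "nat (-k) = Suc n" using False h(3) unfolding n_def by (simp add: nat_eq_iff)
  have "spow j k = replicate (Suc n) (-j)" using False k by (simp add: spow_def del: replicate_Suc)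
  moreover have "k = - int (Suc n)" using False h(3) k by (simp add: nat_eq_iff)
  ultimately show ?thesis using fspow_neg[OF h(1,2), of n] by (simp only:)
qed

lemma lact_start: "j \<in> {1,2} \<Longrightarrow> d \<in> {1,-1} \<Longrightarrow> lact (d*j) (Dl l) = NF j d [] l"
  by (auto simp: lact_vals)

lemma lact_start2: "j \<in> {1,2} \<Longrightarrow> d \<in> {1,-1} \<Longrightarrow> lact (d*j) (NF (3-j) (2*e) es l) = NF j d (e # es) l"
  by (auto simp: lact_vals)

lemma fsq: "g \<in> {1,2} \<Longrightarrow> 0 \<notin> set es \<Longrightarrow>
  foldr lact (sq_word (alt g es)) (Dl l) = (case es of [] \<Rightarrow> Dl l | e # es' \<Rightarrow> NF g (2*e) es' l)"
proof (induction es arbitrary: g)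
  case Nil then show ?case by simp
next
  case (Cons e es)
  have g3: "3 - g \<in> {1,2}" using Cons by auto
  have IH: "foldr lact (sq_word (alt (3-g) es)) (Dl l) = (case es of [] \<Rightarrow> Dl l | e # es' \<Rightarrow> NF (3-g) (2*e) es' l)"
    using Cons g3 by auto
  have s1: "lact g (foldr lact (sq_word (alt (3-g) es)) (Dl l)) = NF g 1 es l"
    and s2: "lact (-g) (foldr lact (sq_word (alt (3-g) es)) (Dl l)) = NF g (-1) es l"
    unfolding IH using lact_start[OF Cons.prems(1), of 1] lact_start[OF Cons.prems(1), of "-1"]
      lact_start2[OF Cons.prems(1), of 1] lact_start2[OF Cons.prems(1), of "-1"]
    by (auto split: list.splits)
  have "e \<noteq> 0" using Cons by auto
  then show ?case using fspow[OF Cons.prems(1) s1 s2, of "2*e"] by simp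
qed

lemma fword: "valid s \<Longrightarrow> foldr lact (word s) (Dl 0) = s"
proof (cases s)
  case (Dl m) then show ?thesis by (simp add: fdp)
next
  case (NF j k es l)
  assume "valid s"
  then have j: "j \<in> {1,2}" and k: "k \<noteq> 0" and es: "0 \<notin> set es" using NF by auto
  have g3: "3 - j \<in> {1,2}" using j by auto
  have IH: "foldr lact (sq_word (alt (3-j) es) @ delta_pow l) (Dl 0) = (case es of [] \<Rightarrow> Dl l | e # es' \<Rightarrow> NF (3-j) (2*e) es' l)"
    using fsq[OF g3 es, of l] fdp by simp
  have s1: "lact j (foldr lact (sq_word (alt (3-j) es) @ delta_pow l) (Dl 0)) = NF j 1 es l"
    and s2: "lact (-j) (foldr lact (sq_word (alt (3-j) es) @ delta_pow l) (Dl 0)) = NF j (-1) es l"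
    unfolding IH using lact_start[OF j, of 1] lact_start[OF j, of "-1"]
      lact_start2[OF j, of 1] lact_start2[OF j, of "-1"]
    by (auto split: list.splits)
  show ?thesis using fspow[OF j s1 s2 k] NF by simp
qed



lemma reduced_Nil: "reduced_sq []" by (simp add: reduced_sq_def)

lemma reduced_Cons: "reduced_sq (x # ts) \<longleftrightarrow>
   (fst x \<in> {1,2} \<and> snd x \<noteq> 0) \<and> reduced_sq ts \<and> (ts \<noteq> [] \<longrightarrow> fst (hd ts) \<noteq> fst x)"
proof -
  have A: "(\<forall>i. Suc i < length (x#ts) \<longrightarrow> fst ((x#ts) ! i) \<noteq> fst ((x#ts) ! Suc i)) \<longleftrightarrow>
     (ts \<noteq> [] \<longrightarrow> fst (hd ts) \<noteq> fst x) \<and> (\<forall>i. Suc i < length ts \<longrightarrow> fst (ts ! i) \<noteq> fst (ts ! Suc i))"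
  proof
    assume h: "\<forall>i. Suc i < length (x#ts) \<longrightarrow> fst ((x#ts) ! i) \<noteq> fst ((x#ts) ! Suc i)"
    have "ts \<noteq> [] \<longrightarrow> fst (hd ts) \<noteq> fst x" using h[rule_format, of 0] by (auto simp: hd_conv_nth)
    moreover have "\<forall>i. Suc i < length ts \<longrightarrow> fst (ts ! i) \<noteq> fst (ts ! Suc i)"
      using h by (metis Suc_less_eq length_Cons nth_Cons_Suc)
    ultimately show "(ts \<noteq> [] \<longrightarrow> fst (hd ts) \<noteq> fst x) \<and> (\<forall>i. Suc i < length ts \<longrightarrow> fst (ts ! i) \<noteq> fst (ts ! Suc i))" by blast
  next
    assume h: "(ts \<noteq> [] \<longrightarrow> fst (hd ts) \<noteq> fst x) \<and> (\<forall>i. Suc i < length ts \<longrightarrow> fst (ts ! i) \<noteq> fst (ts ! Suc i))"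
    show "\<forall>i. Suc i < length (x#ts) \<longrightarrow> fst ((x#ts) ! i) \<noteq> fst ((x#ts) ! Suc i)"
    proof (intro allI impI)
      fix i assume i: "Suc i < length (x#ts)"
      show "fst ((x#ts) ! i) \<noteq> fst ((x#ts) ! Suc i)"
      proof (cases i)
        case 0 then show ?thesis using h i by (auto simp: hd_conv_nth)
      next
        case (Suc i') then show ?thesis using h i by auto
      qed
    qed
  qed
  show ?thesis unfolding reduced_sq_def A by (cases x) auto
qed

lemma reduced_alt: "g \<in> {1,2} \<Longrightarrow> 0 \<notin> set es \<Longrightarrow> reduced_sq (alt g es)"
proof (induction es arbitrary: g)
  case Nil then show ?case by (simp add: reduced_Nil)
next
  case (Cons e es)
  then have g3: "3 - g \<in> {1,2}" by auto
  have r: "reduced_sq (alt (3-g) es)" using Cons.IH[OF g3] Cons.prems by auto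
  have h: "alt (3-g) es \<noteq> [] \<longrightarrow> fst (hd (alt (3-g) es)) \<noteq> g" using Cons.prems by (cases es) auto
  show ?case using r h Cons.prems by (simp add: reduced_Cons)
qed

lemma alt_recover: "g \<in> {1,2} \<Longrightarrow> reduced_sq ts \<Longrightarrow> (ts \<noteq> [] \<longrightarrow> fst (hd ts) = g) \<Longrightarrow>
   ts = alt g (map snd ts)"
proof (induction ts arbitrary: g)
  case Nil then show ?case by simp
next
  case (Cons x ts)
  obtain g' e where x: "x = (g', e)" by (cases x)
  have r: "reduced_sq ts" and d: "ts \<noteq> [] \<longrightarrow> fst (hd ts) \<noteq> g'" and g': "g' \<in> {1,2}"
    using Cons.prems(2) x by (auto simp: reduced_Cons)
  have gg: "g' = g" using Cons.prems(3) x by simp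
  have "ts \<noteq> [] \<longrightarrow> fst (hd ts) = 3 - g"
  proof
    assume "ts \<noteq> []"
    then have "fst (hd ts) \<in> {1,2}" using r unfolding reduced_sq_def
      by (cases ts) auto
    then show "fst (hd ts) = 3 - g" using d gg g' \<open>ts \<noteq> []\<close> by auto
  qed
  moreover have "3 - g \<in> {1,2}" using g' gg by auto
  ultimately have "ts = alt (3-g) (map snd ts)" using Cons.IH r by blast
  then show ?case using x gg by simp
qed

lemma reduced_snd: "reduced_sq ts \<Longrightarrow> 0 \<notin> set (map snd ts)"
  unfolding reduced_sq_def by auto

theorem lemma2:
  fixes w :: "int list"
  assumes "set w \<subseteq> letters"
    and "\<not> (\<exists>m. braid_eq w (delta_pow m))"
  shows "\<exists>!(j, k, ts, l). normal_data j k ts l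
           \<and> braid_eq w (spow j k @ sq_word ts @ delta_pow l)"
proof -
  define s where "s = foldr lact w (Dl 0)"
  have vs: "valid s" and bs: "braid_eq (word s) w" using eval_word[OF assms(1)] s_def by auto
  obtain j k es l where sNF: "s = NF j k es l"
  proof (cases s)
    case (Dl m)
    then have "braid_eq w (delta_pow m)" using bs by (simp add: braid_eq.sym)
    then show ?thesis using assms(2) by blast
  qed
  from vs sNF have j: "j \<in> {1,2}" and k: "k \<noteq> 0" and es: "0 \<notin> set es" by auto
  have g3: "3 - j \<in> {1,2}" using j by auto
  have nd: "normal_data j k (alt (3-j) es) l"
    unfolding normal_data_def using j k reduced_alt[OF g3 es] by (cases es) auto
  have bw: "braid_eq w (spow j k @ sq_word (alt (3-j) es) @ delta_pow l)"
    using bs sNF by (simp add: braid_eq.sym)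
  have uniq: "(j',k',ts',l') = (j,k,alt (3-j) es,l)"
    if h1: "normal_data j' k' ts' l'" and h2: "braid_eq w (spow j' k' @ sq_word ts' @ delta_pow l')"
    for j' k' ts' l'
  proof -
    from h1 have j': "j' \<in> {1,2}" and k': "k' \<noteq> 0" and r': "reduced_sq ts'"
      and hd': "ts' \<noteq> [] \<longrightarrow> fst (hd ts') = 3 - j'" unfolding normal_data_def by auto
    have g3': "3 - j' \<in> {1,2}" using j' by auto
    have tsa: "ts' = alt (3-j') (map snd ts')" using alt_recover[OF g3' r' hd'] .
    define s' where "s' = NF j' k' (map snd ts') l'"
    have vs': "valid s'" using j' k' reduced_snd[OF r'] by (simp add: s'_def)
    have ws': "word s' = spow j' k' @ sq_word ts' @ delta_pow l'" using tsa by (simp add: s'_def)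
    have "s = foldr lact (word s') (Dl 0)" unfolding s_def
      using inv_foldr[of w "word s'" "Dl 0"] h2 ws' by simp
    also have "\<dots> = s'" by (rule fword[OF vs'])
    finally have "s = s'" .
    then show ?thesis using sNF tsa by (simp add: s'_def)
  qed
  show ?thesis
    apply (rule ex1I[of _ "(j, k, alt (3-j) es, l)"])
    using nd bw apply simp
    using uniq by auto
qed

end
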